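(* Let $N$ be a perfect planar network in an annulus, drawn (after an isotopy) so that no internal vertex lies on the cut $\rho$, and let $\bar w_e=w_e\lambda^{\mathrm{ind}(e)}$ be the modified edge weights, so that $w_P=(-1)^{c(C_P)-1}\prod_{e\in P}\bar w_e$ for every path $P$ between boundary vertices. Regard each boundary measurement $M(i,j)$, for a source $b_i$ and a sink $b_j$, as the formal power series $\sum_P w_P$ in the commuting indeterminates $\bar w_e$, $e\in E$, with integer coefficients, the sum over all paths $P$ from $b_i$ to $b_j$. Then each boundary measurement is a rational function of the modified weights $\bar w_e$, $e\in E$ (i.e. the formal series equals the expansion of a rational function with integer coefficients).
   Context: A perfect planar network in an annulus $N=(G,\rho,w)$ consists of the following data. $G=(V,E)$ is a directed graph embedded in an annulus, considered up to isotopy relative to the boundary. Exactly $n$ of its vertices lie on the boundary circles (boundary vertices): $n_1\ge 0$ on the outer circle and $n_2=n-n_1\ge 0$ on the inner circle. Each boundary vertex is either a source (exactly one outgoing edge, no incoming edges) or a sink (exactly one incoming edge, no outgoing edges). Every internal vertex has degree $3$ and is either white (exactly one incoming edge) or black (exactly one outgoing edge). A cut $\rho$ is an oriented non-self-intersecting curve from a base point on the inner circle to a base point on the outer circle, both base points distinct from the boundary vertices, considered up to isotopy relative to its endpoints. For an oriented curve $\gamma$ with endpoints off $\rho$, $\mathrm{ind}(\gamma)$ denotes the algebraic intersection number of $\gamma$ with $\rho$. Each edge $e$ carries a weight $w_e$. A path is a sequence of edges $(e_1,\dots,e_r)$ with $e_i=(v_i,v_{i+1})$; edges may repeat. For a closed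 piecewise smooth curve $C$ without cusps, the concordance number $c(C)\in\mathbb Z/2\mathbb Z$ is its rotation number mod 2 (equivalently: approximate $C$ by a closed polygon, fix a generic oriented line $l$, and count mod 2 the pairs of consecutive segments $(e',e'')$ such that the direction vector of $l$ lies in the interior of the cone spanned by $e',e''$). For a path $P$ from a source $b'$ to a sink $b''$, $C_P$ is the closed curve obtained by appending to $P$: if $b',b''$ lie on the same circle, the counterclockwise arc of that circle from $b''$ to $b'$; otherwise, the curve going from $b''$ counterclockwise along its circle to the base point of $\rho$, then along $\rho$ to the other base point, then counterclockwise along the other circle to $b'$. The weight of $P$ is $w_P(\lambda)=(-1)^{c(C_P)-1}\lambda^{\mathrm{ind}(P)}\prod_{e\in P}w_e$ (product with multiplicity), $\lambda$ an independent variable. The boundary measurement $M(i,j)$ is the sum of $w_P$ over all paths from $b_i$ to $b_j$. *)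

theory Defs
  imports "HOL-Analysis.Analysis"
begin

definition annulus :: "complex set" where
  "annulus = {z. 1 \<le> cmod z \<and> cmod z \<le> 2}"

definition on_boundary :: "complex \<Rightarrow> bool" where
  "on_boundary z \<longleftrightarrow> cmod z = 1 \<or> cmod z = 2"

fun polyline :: "complex list \<Rightarrow> real \<Rightarrow> complex" where
  "polyline [] = linepath 0 0"
| "polyline [p] = linepath p p"
| "polyline [p, q] = linepath p q"
| "polyline (p # q # r # xs) = linepath p q +++ polyline (q # r # xs)"

text \<open>Edges have type 'e, vertices type 'v (both finite). tail/head give the
orientation, pos the position of a vertex, bends e the interior corner points
of the polygonal drawing of edge e, rho the list of corner points of the cut
(from the inner base point to the outer base point).\<close>

definition edge_points ::
  "('e \<Rightarrow> 'v) \<Rightarrow> ('e \<Rightarrow> 'v) \<Rightarrow> ('v \<Rightarrow> complex) \<Rightarrow> ('e \<Rightarrow> complex list) \<Rightarrow> 'e \<Rightarrow> complex list" where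
  "edge_points tail head pos bends e = pos (tail e) # bends e @ [pos (head e)]"

definition indeg :: "('e::finite \<Rightarrow> 'v) \<Rightarrow> 'v \<Rightarrow> nat" where
  "indeg head v = card {e. head e = v}"

definition outdeg :: "('e::finite \<Rightarrow> 'v) \<Rightarrow> 'v \<Rightarrow> nat" where
  "outdeg tail v = card {e. tail e = v}"

definition perfect_planar_network ::
  "('e::finite \<Rightarrow> 'v::finite) \<Rightarrow> ('e \<Rightarrow> 'v) \<Rightarrow> ('v \<Rightarrow> complex) \<Rightarrow> ('e \<Rightarrow> complex list)
    \<Rightarrow> complex list \<Rightarrow> bool" where
  "perfect_planar_network tail head pos bends rho \<longleftrightarrow>
     inj pos \<and> (\<forall>v. pos v \<in> annulus)
     \<comment> \<open>boundary vertices (those on the circles) are sources or sinks\<close>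
   \<and> (\<forall>v. on_boundary (pos v) \<longrightarrow>
          (outdeg tail v = 1 \<and> indeg head v = 0) \<or> (indeg head v = 1 \<and> outdeg tail v = 0))
     \<comment> \<open>internal vertices: degree 3, white (one incoming) or black (one outgoing)\<close>
   \<and> (\<forall>v. \<not> on_boundary (pos v) \<longrightarrow>
          indeg head v + outdeg tail v = 3 \<and> (indeg head v = 1 \<or> outdeg tail v = 1))
     \<comment> \<open>embedding of the edges in the annulus\<close>
   \<and> (\<forall>e. path_image (polyline (edge_points tail head pos bends e)) \<subseteq> annulus)
   \<and> (\<forall>e. \<forall>z \<in> path_image (polyline (edge_points tail head pos bends e)).
          on_boundary z \<longrightarrow> z = pos (tail e) \<or> z = pos (head e))
   \<and> (\<forall>e. if tail e = head e then simple_path (polyline (edge_points tail head pos bends e))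
          else arc (polyline (edge_points tail head pos bends e)))
   \<and> (\<forall>e e'. e \<noteq> e' \<longrightarrow>
          path_image (polyline (edge_points tail head pos bends e)) \<inter>
          path_image (polyline (edge_points tail head pos bends e'))
          \<subseteq> pos ` ({tail e, head e} \<inter> {tail e', head e'}))
   \<and> (\<forall>v e. pos v \<in> path_image (polyline (edge_points tail head pos bends e)) \<longrightarrow>
          v = tail e \<or> v = head e)
     \<comment> \<open>the cut: a simple curve from the inner circle to the outer circle\<close>
   \<and> length rho \<ge> 2 \<and> arc (polyline rho) \<and> path_image (polyline rho) \<subseteq> annulus
   \<and> cmod (List.hd rho) = 1 \<and> cmod (last rho) = 2
   \<and> List.hd rho \<notin> range pos \<and> last rho \<notin> range pos"

definition is_path :: "('e \<Rightarrow> 'v) \<Rightarrow> ('e \<Rightarrow> 'v) \<Rightarrow> 'e list \<Rightarrow> 'v \<Rightarrow> 'v \<Rightarrow> bool" where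
  "is_path tail head P a b \<longleftrightarrow> P \<noteq> [] \<and> tail (List.hd P) = a \<and> head (last P) = b \<and>
     (\<forall>k. Suc k < length P \<longrightarrow> head (P ! k) = tail (P ! Suc k))"

text \<open>Seg p q: straight segment from p to q.  Arc p q: arc of the circle centred
at 0 through p (|p| = |q|), traversed counterclockwise from p to q.\<close>

datatype piece = Seg complex complex | Arc complex complex

fun start_dir :: "piece \<Rightarrow> complex" where
  "start_dir (Seg p q) = q - p"
| "start_dir (Arc p q) = \<i> * p"

fun end_dir :: "piece \<Rightarrow> complex" where
  "end_dir (Seg p q) = q - p"
| "end_dir (Arc p q) = \<i> * q"

definition ccw_sweep :: "complex \<Rightarrow> complex \<Rightarrow> real" where
  "ccw_sweep p q = (if Arg (q / p) \<le> 0 then Arg (q / p) + 2 * pi else Arg (q / p))"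

fun piece_turn :: "piece \<Rightarrow> real" where
  "piece_turn (Seg p q) = 0"
| "piece_turn (Arc p q) = ccw_sweep p q"

definition corner_turn :: "complex \<Rightarrow> complex \<Rightarrow> real" where
  "corner_turn u v = Arg (v / u)"

definition next_piece :: "piece list \<Rightarrow> nat \<Rightarrow> piece" where
  "next_piece ps k = ps ! (Suc k mod length ps)"

definition no_cusps :: "piece list \<Rightarrow> bool" where
  "no_cusps ps \<longleftrightarrow> ps \<noteq> [] \<and> (\<forall>k < length ps.
      end_dir (ps ! k) \<noteq> 0 \<and> start_dir (ps ! k) \<noteq> 0 \<and>
      corner_turn (end_dir (ps ! k)) (start_dir (next_piece ps k)) \<noteq> pi)"

definition total_turning :: "piece list \<Rightarrow> real" where
  "total_turning ps = (\<Sum>k < length ps. piece_turn (ps ! k) +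
      corner_turn (end_dir (ps ! k)) (start_dir (next_piece ps k)))"

definition rotation_number :: "piece list \<Rightarrow> int" where
  "rotation_number ps = round (total_turning ps / (2 * pi))"

text \<open>concordance number in Z/2Z, represented by 0 or 1\<close>
definition concordance :: "piece list \<Rightarrow> int" where
  "concordance ps = rotation_number ps mod 2"

fun segs :: "complex list \<Rightarrow> piece list" where
  "segs (p # q # xs) = Seg p q # segs (q # xs)"
| "segs _ = []"

definition closing_pieces :: "complex list \<Rightarrow> complex \<Rightarrow> complex \<Rightarrow> piece list" where
  "closing_pieces rho src snk =
     (if cmod src = cmod snk then [Arc snk src]
      else if cmod snk = 1 then [Arc snk (List.hd rho)] @ segs rho @ [Arc (last rho) src]
      else [Arc snk (last rho)] @ segs (rev rho) @ [Arc (List.hd rho) src])"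

definition C_P :: "('e \<Rightarrow> 'v) \<Rightarrow> ('e \<Rightarrow> 'v) \<Rightarrow> ('v \<Rightarrow> complex) \<Rightarrow> ('e \<Rightarrow> complex list)
    \<Rightarrow> complex list \<Rightarrow> 'e list \<Rightarrow> piece list" where
  "C_P tail head pos bends rho P =
     concat (map (\<lambda>e. segs (edge_points tail head pos bends e)) P)
     @ closing_pieces rho (pos (tail (List.hd P))) (pos (head (last P)))"

definition path_sign :: "('e \<Rightarrow> 'v) \<Rightarrow> ('e \<Rightarrow> 'v) \<Rightarrow> ('v \<Rightarrow> complex) \<Rightarrow> ('e \<Rightarrow> complex list)
    \<Rightarrow> complex list \<Rightarrow> 'e list \<Rightarrow> int" where
  "path_sign tail head pos bends rho P =
     (if concordance (C_P tail head pos bends rho P) = 1 then 1 else -1)"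

text \<open>A series is a map from monomials (exponent vectors 'e => nat) to integer
coefficients; a polynomial is a series of finite support.\<close>

type_synonym 'e series = "('e \<Rightarrow> nat) \<Rightarrow> int"

definition series_mult :: "'e::finite series \<Rightarrow> 'e series \<Rightarrow> 'e series" where
  "series_mult f g = (\<lambda>m. \<Sum>a \<in> {a. \<forall>e. a e \<le> m e}. f a * g (\<lambda>e. m e - a e))"

definition is_polynomial :: "'e series \<Rightarrow> bool" where
  "is_polynomial f \<longleftrightarrow> finite {m. f m \<noteq> 0}"

definition rational_series :: "'e::finite series \<Rightarrow> bool" where
  "rational_series M \<longleftrightarrow> (\<exists>p q. is_polynomial p \<and> is_polynomial q \<and> q \<noteq> (\<lambda>_. 0)
       \<and> series_mult q M = p)"

text \<open>Boundary measurement as a formal series in the modified weights: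
coefficient of the monomial m is the sum of the signs of all paths from a to b
using each edge e exactly m e times.\<close>
definition boundary_measurement_series ::
  "('e::finite \<Rightarrow> 'v) \<Rightarrow> ('e \<Rightarrow> 'v) \<Rightarrow> ('v \<Rightarrow> complex) \<Rightarrow> ('e \<Rightarrow> complex list)
    \<Rightarrow> complex list \<Rightarrow> 'v \<Rightarrow> 'v \<Rightarrow> 'e series" where
  "boundary_measurement_series tail head pos bends rho a b =
     (\<lambda>m. \<Sum>P \<in> {P. is_path tail head P a b \<and> (\<forall>e. count_list P e = m e)}.
            path_sign tail head pos bends rho P)"

end

theory Submission
  imports Defs Jordan_Normal_Form.Determinant
begin

typedef 'e ser = "UNIV :: (('e::finite \<Rightarrow> nat) \<Rightarrow> int) set" morphisms coef Ser by auto

declare Ser_inverse[simp] coef_inverse[simp]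
lemma coef_inject': "f = g \<longleftrightarrow> coef f = coef g" by (simp add: coef_inject)
lemma Ser_inject'[simp]: "Ser a = Ser b \<longleftrightarrow> a = b" by (metis Ser_inverse UNIV_I)

definition below :: "('e \<Rightarrow> nat) \<Rightarrow> ('e \<Rightarrow> nat) set" where
  "below m = {a. \<forall>e. a e \<le> m e}"

lemma finite_below[simp]: "finite (below (m::'e::finite \<Rightarrow> nat))"
proof -
  have "below m \<subseteq> PiE UNIV (\<lambda>e. {..m e})" by (auto simp: below_def PiE_UNIV_domain)
  moreover have "finite (PiE UNIV (\<lambda>e. {..m e}))" by (rule finite_PiE) auto
  ultimately show ?thesis by (rule finite_subset)
qed

lemma series_mult_below: "series_mult f g m = (\<Sum>a\<in>below m. f a * g (\<lambda>e. m e - a e))"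
  by (simp add: series_mult_def below_def)

lemma series_mult_comm: "series_mult f (g::'e::finite series) = series_mult g f"
proof (rule ext)
  fix m
  show "series_mult f g m = series_mult g f m"
    unfolding series_mult_below
    by (rule sum.reindex_bij_witness[where i="\<lambda>a e. m e - a e" and j="\<lambda>a e. m e - a e"])
       (auto simp: below_def fun_eq_iff)
qed

lemma series_mult_assoc: "series_mult (series_mult f g) h = series_mult f (series_mult g (h::'e::finite series))"
proof (rule ext)
  fix m
  have "series_mult (series_mult f g) h m = (\<Sum>a\<in>below m. \<Sum>b\<in>below a. f b * g (\<lambda>e. a e - b e) * h (\<lambda>e. m e - a e))"
    unfolding series_mult_below by (simp add: sum_distrib_right)
  also have "\<dots> = (\<Sum>(a,b)\<in>Sigma (below m) below. f b * g (\<lambda>e. a e - b e) * h (\<lambda>e. m e - a e))"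
    by (rule sum.Sigma) auto
  also have "\<dots> = (\<Sum>(b,c)\<in>Sigma (below m) (\<lambda>b. below (\<lambda>e. m e - b e)). f b * (g c * h (\<lambda>e. m e - b e - c e)))"
    apply (rule sum.reindex_bij_witness[where i="\<lambda>(b,c). ((\<lambda>e. b e + c e), b)" and j="\<lambda>(a,b). (b, (\<lambda>e. a e - b e))"])
    apply (auto simp: below_def fun_eq_iff intro: diff_le_mono)
     apply (meson order_trans)
    apply (metis add.commute le_diff_conv2 diff_le_self le_trans)
    done
  also have "\<dots> = (\<Sum>b\<in>below m. \<Sum>c\<in>below (\<lambda>e. m e - b e). f b * (g c * h (\<lambda>e. m e - b e - c e)))"
    by (rule sum.Sigma[symmetric]) auto
  also have "\<dots> = series_mult f (series_mult g h) m"
    unfolding series_mult_below by (simp add: sum_distrib_left)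
  finally show "series_mult (series_mult f g) h m = series_mult f (series_mult g h) m" .
qed

definition one_s :: "'e series" where "one_s = (\<lambda>m. if m = (\<lambda>_. 0) then 1 else 0)"

lemma series_mult_one: "series_mult one_s (g::'e::finite series) = g"
proof (rule ext)
  fix m
  have "series_mult one_s g m = (\<Sum>a\<in>below m. if a = (\<lambda>_. 0) then g (\<lambda>e. m e - a e) else 0)"
    unfolding series_mult_below one_s_def by (rule sum.cong) auto
  also have "\<dots> = g m" apply (subst sum.delta) apply simp apply (simp add: below_def) done
  finally show "series_mult one_s g m = g m" .
qed

lemma series_mult_distrib: "series_mult (\<lambda>m. f m + g m) (h::'e::finite series) = (\<lambda>m. series_mult f h m + series_mult g h m)"
  by (rule ext) (simp add: series_mult_below distrib_right sum.distrib)

instantiation ser :: (finite) comm_ring_1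
begin
definition "0 = Ser (\<lambda>_. 0)"
definition "1 = Ser one_s"
definition "f + g = Ser (\<lambda>m. coef f m + coef g m)"
definition "f - g = Ser (\<lambda>m. coef f m - coef g m)"
definition "- f = Ser (\<lambda>m. - coef f m)"
definition "f * g = Ser (series_mult (coef f) (coef g))"
instance
proof
  fix a b c :: "'a ser"
  show "a * b * c = a * (b * c)" by (simp add: times_ser_def series_mult_assoc)
  show "a * b = b * a" by (simp add: times_ser_def series_mult_comm)
  show "1 * a = a" by (simp add: times_ser_def one_ser_def series_mult_one)
  show "(a + b) * c = a * c + b * c" by (simp add: times_ser_def plus_ser_def series_mult_distrib)
  show "a + b + c = a + (b + c)" by (simp add: plus_ser_def add.assoc)
  show "a + b = b + a" by (simp add: plus_ser_def add.commute)
  show "0 + a = a" by (simp add: plus_ser_def zero_ser_def)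
  show "- a + a = 0" by (simp add: plus_ser_def zero_ser_def uminus_ser_def)
  show "a - b = a + - b" by (simp add: plus_ser_def minus_ser_def uminus_ser_def)
  show "(0::'a ser) \<noteq> 1"
  proof
    assume "(0::'a ser) = 1"
    then have "coef (0::'a ser) (\<lambda>_. 0) = coef (1::'a ser) (\<lambda>_. 0)" by simp
    thus False by (simp add: zero_ser_def one_ser_def one_s_def)
  qed
qed
end


section \<open>Polynomials\<close>

definition poly_s :: "'e::finite ser \<Rightarrow> bool" where "poly_s f \<longleftrightarrow> is_polynomial (coef f)"

lemma poly_s_0[simp]: "poly_s 0" by (simp add: poly_s_def is_polynomial_def zero_ser_def)
lemma poly_s_1[simp]: "poly_s 1"
proof -
  have "{m. one_s m \<noteq> (0::int)} \<subseteq> {\<lambda>_. 0}" by (auto simp: one_s_def split: if_splits)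
  thus ?thesis by (auto simp: poly_s_def is_polynomial_def one_ser_def intro: finite_subset)
qed
lemma poly_s_add[simp]: "poly_s f \<Longrightarrow> poly_s g \<Longrightarrow> poly_s (f + g)"
proof -
  assume "poly_s f" "poly_s g"
  moreover have "{m. coef f m + coef g m \<noteq> 0} \<subseteq> {m. coef f m \<noteq> 0} \<union> {m. coef g m \<noteq> 0}" by auto
  ultimately show ?thesis by (auto simp: poly_s_def is_polynomial_def plus_ser_def intro: finite_subset)
qed
lemma poly_s_uminus[simp]: "poly_s f \<Longrightarrow> poly_s (- f)"
  by (simp add: poly_s_def is_polynomial_def uminus_ser_def)
lemma poly_s_diff[simp]: "poly_s f \<Longrightarrow> poly_s g \<Longrightarrow> poly_s (f - g)"
  by (metis poly_s_add poly_s_uminus diff_conv_add_uminus)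
lemma poly_s_mult[simp]: "poly_s f \<Longrightarrow> poly_s g \<Longrightarrow> poly_s (f * g)"
proof -
  assume pf: "poly_s f" and pg: "poly_s g"
  have "{m. series_mult (coef f) (coef g) m \<noteq> 0} \<subseteq>
        (\<lambda>(a,b). \<lambda>e. a e + b e) ` ({a. coef f a \<noteq> 0} \<times> {b. coef g b \<noteq> 0})"
  proof
    fix m assume "m \<in> {m. series_mult (coef f) (coef g) m \<noteq> 0}"
    then have "(\<Sum>a\<in>below m. coef f a * coef g (\<lambda>e. m e - a e)) \<noteq> 0" by (simp add: series_mult_below)
    then obtain a where a: "a \<in> below m" "coef f a * coef g (\<lambda>e. m e - a e) \<noteq> 0"
      by (meson sum.not_neutral_contains_not_neutral)
    have "m = (\<lambda>e. a e + (m e - a e))" using a(1) by (auto simp: below_def fun_eq_iff)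
    thus "m \<in> (\<lambda>(a,b). \<lambda>e. a e + b e) ` ({a. coef f a \<noteq> 0} \<times> {b. coef g b \<noteq> 0})"
      using a(2) by (intro image_eqI[where x="(a, \<lambda>e. m e - a e)"]) auto
  qed
  moreover have "finite ((\<lambda>(a,b). \<lambda>e. a e + b e) ` ({a. coef f a \<noteq> 0} \<times> {b. coef g b \<noteq> 0}))"
    using pf pg by (simp add: poly_s_def is_polynomial_def)
  ultimately show ?thesis by (auto simp: poly_s_def is_polynomial_def times_ser_def intro: finite_subset)
qed
lemma poly_s_sum: "(\<And>x. x \<in> F \<Longrightarrow> poly_s (f x)) \<Longrightarrow> poly_s (sum f F)"
  by (induct F rule: infinite_finite_induct) auto
lemma poly_s_prod: "(\<And>x. x \<in> F \<Longrightarrow> poly_s (f x)) \<Longrightarrow> poly_s (prod f F)"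
  by (induct F rule: infinite_finite_induct) auto
lemma poly_s_power: "poly_s f \<Longrightarrow> poly_s (f ^ k)"
  by (induct k) auto
lemma poly_s_signof: "poly_s (signof p :: 'e::finite ser)"
  by (cases p rule: sign_cases) auto

lemma poly_s_det:
  assumes "\<And>i j. i < dim_row A \<Longrightarrow> j < dim_col A \<Longrightarrow> poly_s (A $$ (i,j))"
  shows "poly_s (det (A :: 'e::finite ser mat))"
  unfolding det_def using assms
  by (auto intro!: poly_s_sum poly_s_mult poly_s_signof poly_s_prod simp: permutes_def)

lemma poly_s_adj:
  assumes A: "A \<in> carrier_mat n n" and "\<And>i j. i < n \<Longrightarrow> j < n \<Longrightarrow> poly_s (A $$ (i,j))"
    and "i < n" "j < n"
  shows "poly_s (adj_mat (A :: 'e::finite ser mat) $$ (i,j))"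
proof -
  have "adj_mat A $$ (i,j) = cofactor A j i" using A assms(3,4) by (simp add: adj_mat_def)
  also have "\<dots> = (-1)^(j+i) * det (mat_delete A j i)" by (simp add: cofactor_def)
  finally show ?thesis using A assms
    by (auto intro!: poly_s_mult poly_s_power poly_s_det simp: mat_delete_def)
qed

definition c0 :: "'e::finite ser \<Rightarrow> int" where "c0 f = coef f (\<lambda>_. 0)"

lemma below_zero: "below (\<lambda>_. 0) = {\<lambda>_. 0}" by (auto simp: below_def)

interpretation c0: comm_ring_hom c0
  by unfold_locales
    (simp_all add: c0_def zero_ser_def one_ser_def one_s_def times_ser_def plus_ser_def series_mult_below below_zero)


section \<open>Series of weighted lists\<close>

fun linA :: "('e \<Rightarrow> 'e \<Rightarrow> int) \<Rightarrow> 'e list \<Rightarrow> int" where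
  "linA A (a # b # xs) = A a b * linA A (b # xs)"
| "linA A _ = 1"

definition delta_m :: "'e \<Rightarrow> 'e \<Rightarrow> nat" where "delta_m e = (\<lambda>x. if x = e then 1 else 0)"
definition Xs :: "'e::finite \<Rightarrow> 'e ser" where "Xs e = Ser (\<lambda>m. if m = delta_m e then 1 else 0)"
definition Ks :: "int \<Rightarrow> 'e::finite ser" where "Ks c = Ser (\<lambda>m. if m = (\<lambda>_. 0) then c else 0)"

lemma sum_below_single:
  fixes m :: "'e::finite \<Rightarrow> nat"
  assumes "b \<in> below m" shows "(\<Sum>a\<in>below m. (if a = b then c else 0) * h a) = (c * h b :: int)"
proof -
  have "(\<Sum>a\<in>below m. (if a = b then c else 0) * h a) = (\<Sum>a\<in>below m. if a = b then c * h b else 0)"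
    by (rule sum.cong) auto
  also have "\<dots> = c * h b" using assms finite_below[of m] by (simp add: sum.delta[of "below m" b "\<lambda>_. c * h b"])
  finally show ?thesis .
qed

lemma coef_Ks_mult: "coef (Ks c * H) m = c * coef H m"
proof -
  have "coef (Ks c * H) m = (\<Sum>a\<in>below m. (if a = (\<lambda>_. 0) then c else 0) * coef H (\<lambda>e. m e - a e))"
    by (simp add: times_ser_def Ks_def series_mult_below)
  also have "\<dots> = c * coef H (\<lambda>e. m e - 0)"
    by (rule sum_below_single[where h="\<lambda>a. coef H (\<lambda>e. m e - a e)"]) (simp add: below_def)
  finally show ?thesis by simp
qed

lemma coef_Xs_mult: "coef (Xs e * H) m = (if 1 \<le> m e then coef H (\<lambda>x. m x - delta_m e x) else 0)"
proof -
  have "coef (Xs e * H) m = (\<Sum>a\<in>below m. (if a = delta_m e then 1 else 0) * coef H (\<lambda>x. m x - a x))"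
    by (simp add: times_ser_def Xs_def series_mult_below)
  also have "\<dots> = (if 1 \<le> m e then coef H (\<lambda>x. m x - delta_m e x) else 0)"
  proof (cases "1 \<le> m e")
    case True
    then have "delta_m e \<in> below m" by (auto simp: below_def delta_m_def)
    then show ?thesis using True
      by (simp add: sum_below_single[where h="\<lambda>a. coef H (\<lambda>x. m x - a x)"])
  next
    case False
    then have "\<And>a. a \<in> below m \<Longrightarrow> a \<noteq> delta_m e"
      by (auto simp: below_def delta_m_def fun_eq_iff) (metis One_nat_def)
    then show ?thesis using False by (auto intro!: sum.neutral)
  qed
  finally show ?thesis .
qed

lemma coef_add: "coef (f + g) m = coef f m + coef g m" by (simp add: plus_ser_def)
lemma coef_zero: "coef 0 m = 0" by (simp add: zero_ser_def)
lemma coef_sum: "coef (sum f S) m = (\<Sum>x\<in>S. coef (f x) m)"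
  by (induct S rule: infinite_finite_induct) (auto simp: coef_add coef_zero)

lemma poly_s_Xs[simp]: "poly_s (Xs e)"
proof -
  have "{m. coef (Xs e) m \<noteq> 0} \<subseteq> {delta_m e}" by (auto simp: Xs_def split: if_splits)
  thus ?thesis by (auto simp: poly_s_def is_polynomial_def intro: finite_subset)
qed
lemma poly_s_Ks[simp]: "poly_s (Ks c)"
proof -
  have "{m. coef (Ks c :: 'e::finite ser) m \<noteq> 0} \<subseteq> {\<lambda>_. 0}" by (auto simp: Ks_def split: if_splits)
  thus ?thesis by (auto simp: poly_s_def is_polynomial_def intro: finite_subset)
qed
lemma c0_Xs[simp]: "c0 (Xs e) = 0"
  by (auto simp: c0_def Xs_def delta_m_def fun_eq_iff)

definition Lset :: "'e \<Rightarrow> ('e \<Rightarrow> nat) \<Rightarrow> 'e list set" where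
  "Lset e m = {P. P \<noteq> [] \<and> hd P = e \<and> (\<forall>x. count_list P x = m x)}"

lemma finite_counts: "finite {P::'e::finite list. \<forall>x. count_list P x = m x}"
proof -
  have "{P::'e list. \<forall>x. count_list P x = m x} \<subseteq> {P. set P \<subseteq> UNIV \<and> length P \<le> sum m UNIV}"
  proof (safe, simp)
    fix P :: "'e list" assume "\<forall>x. count_list P x = m x"
    then have "sum (count_list P) UNIV = sum m UNIV" by simp
    thus "length P \<le> sum m UNIV" using sum_count_set[of P UNIV] by simp
  qed
  moreover have "finite {P::'e list. set P \<subseteq> UNIV \<and> length P \<le> sum m UNIV}"
    by (rule finite_lists_length_le) simp
  ultimately show ?thesis by (rule finite_subset)
qed

lemma finite_Lset[simp]: "finite (Lset (e::'e::finite) m)"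
  by (rule finite_subset[OF _ finite_counts[of m]]) (auto simp: Lset_def)

definition Gs :: "('e \<Rightarrow> 'e \<Rightarrow> int) \<Rightarrow> ('e \<Rightarrow> int) \<Rightarrow> 'e::finite \<Rightarrow> 'e ser" where
  "Gs A \<beta> e = Ser (\<lambda>m. \<Sum>P\<in>Lset e m. linA A P * \<beta> (last P))"

lemma Lset_split:
  "Lset e (\<lambda>x. m' x + delta_m e x) =
     (if m' = (\<lambda>_. 0) then {[e]} else {}) \<union> (Cons e) ` (\<Union>e'. Lset e' m')"
proof (intro equalityI subsetI)
  fix P assume "P \<in> Lset e (\<lambda>x. m' x + delta_m e x)"
  then obtain P' where P: "P = e # P'" and c: "\<forall>x. count_list P x = m' x + delta_m e x"
    by (auto simp: Lset_def neq_Nil_conv)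
  have c': "\<forall>x. count_list P' x = m' x"
  proof
    fix x show "count_list P' x = m' x" using c[rule_format, of x] by (auto simp: P delta_m_def split: if_splits)
  qed
  show "P \<in> (if m' = (\<lambda>_. 0) then {[e]} else {}) \<union> (Cons e) ` (\<Union>e'. Lset e' m')"
  proof (cases P')
    case Nil then show ?thesis using c' P by (auto simp: fun_eq_iff)
  next
    case (Cons a l) then show ?thesis using c' P by (auto simp: Lset_def)
  qed
next
  fix P assume "P \<in> (if m' = (\<lambda>_. 0) then {[e]} else {}) \<union> (Cons e) ` (\<Union>e'. Lset e' m')"
  then show "P \<in> Lset e (\<lambda>x. m' x + delta_m e x)"
    by (auto simp: Lset_def delta_m_def split: if_splits)
qed

lemma coef_Ks: "coef (Ks c) m = (if m = (\<lambda>_. 0) then c else 0)" by (simp add: Ks_def)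
lemma coef_Gs: "coef (Gs A \<beta> e) m = (\<Sum>P\<in>Lset e m. linA A P * \<beta> (last P))" by (simp add: Gs_def)

lemma Gs_rec: "Gs A \<beta> e = Xs e * (Ks (\<beta> e) + (\<Sum>e'\<in>UNIV. Ks (A e e') * Gs A \<beta> e'))"
proof (subst coef_inject', rule ext)
  fix m
  show "coef (Gs A \<beta> e) m = coef (Xs e * (Ks (\<beta> e) + (\<Sum>e'\<in>UNIV. Ks (A e e') * Gs A \<beta> e'))) m"
  proof (cases "1 \<le> m e")
    case False
    have "P \<notin> Lset e m" for P
    proof
      assume "P \<in> Lset e m"
      then have "e \<in> set P" "count_list P e = m e" by (auto simp: Lset_def)
      then show False using False count_list_0_iff[of P e] by simp
    qed
    then have "Lset e m = {}" by blast
    then show ?thesis using False by (simp add: coef_Xs_mult Gs_def)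
  next
    case True
    define m' where "m' = (\<lambda>x. m x - delta_m e x)"
    have mm: "m = (\<lambda>x. m' x + delta_m e x)" using True by (auto simp: m'_def delta_m_def fun_eq_iff)
    have disj: "(if m' = (\<lambda>_. 0) then {[e]} else {}) \<inter> (Cons e) ` (\<Union>e'. Lset e' m') = {}"
      by (auto simp: Lset_def)
    have "coef (Gs A \<beta> e) m = (\<Sum>P\<in>Lset e m. linA A P * \<beta> (last P))" by (simp add: Gs_def)
    also have "\<dots> = (\<Sum>P\<in>(if m' = (\<lambda>_. 0) then {[e]} else {}). linA A P * \<beta> (last P))
        + (\<Sum>P\<in>(Cons e) ` (\<Union>e'. Lset e' m'). linA A P * \<beta> (last P))"
      unfolding mm Lset_split by (rule sum.union_disjoint) (use disj in auto)
    also have "(\<Sum>P\<in>(if m' = (\<lambda>_. 0) then {[e]} else {}). linA A P * \<beta> (last P))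
        = (if m' = (\<lambda>_. 0) then \<beta> e else 0)" by simp
    also have "(\<Sum>P\<in>(Cons e) ` (\<Union>e'. Lset e' m'). linA A P * \<beta> (last P))
        = (\<Sum>P\<in>(\<Union>e'. Lset e' m'). linA A (e # P) * \<beta> (last (e # P)))"
      by (subst sum.reindex) auto
    also have "\<dots> = (\<Sum>e'\<in>UNIV. \<Sum>P\<in>Lset e' m'. linA A (e # P) * \<beta> (last (e # P)))"
      by (rule sum.UNION_disjoint) (simp, simp, auto simp: Lset_def)
    also have "\<dots> = (\<Sum>e'\<in>UNIV. A e e' * (\<Sum>P\<in>Lset e' m'. linA A P * \<beta> (last P)))"
      unfolding sum_distrib_left
    proof (intro sum.cong refl)
      fix e' P assume "P \<in> Lset e' m'"
      then obtain l where "P = e' # l" by (auto simp: Lset_def neq_Nil_conv)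
      then show "linA A (e # P) * \<beta> (last (e # P)) = A e e' * (linA A P * \<beta> (last P))" by simp
    qed
    finally show ?thesis using True
      by (simp add: coef_Xs_mult coef_add coef_sum coef_Ks_mult coef_Gs coef_Ks m'_def[symmetric])
  qed
qed


lemma ifmul: "(if P then 1 else 0) * (x::'a::ring_1) = (if P then x else 0)" by simp

lemma sum_ed:
  assumes "bij_betw ed {0..<n} (UNIV::'e set)"
  shows "(\<Sum>l\<in>{0..<n}. f (ed l)) = (\<Sum>e\<in>UNIV. f e)"
  using sum.reindex_bij_betw[OF assms, of f] .

lemma transfer_rational:
  fixes \<alpha> \<beta> :: "'e::finite \<Rightarrow> int" and A :: "'e \<Rightarrow> 'e \<Rightarrow> int"
  shows "rational_series (\<lambda>m. \<Sum>P\<in>{P. P \<noteq> [] \<and> (\<forall>x. count_list P x = m x)}. \<alpha> (hd P) * linA A P * \<beta> (last P))"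
proof -
  define n where "n = card (UNIV::'e set)"
  obtain ed where bij: "bij_betw ed {0..<n} (UNIV::'e set)"
    using ex_bij_betw_nat_finite[of "UNIV::'e set"] unfolding n_def by auto
  define M :: "'e ser mat" where
    "M = mat n n (\<lambda>(k,l). (if k = l then 1 else 0) - Xs (ed k) * Ks (A (ed k) (ed l)))"
  define b :: "'e ser vec" where "b = vec n (\<lambda>k. Xs (ed k) * Ks (\<beta> (ed k)))"
  define g :: "'e ser vec" where "g = vec n (\<lambda>k. Gs A \<beta> (ed k))"
  have Mc: "M \<in> carrier_mat n n" by (simp add: M_def)
  have gc: "g \<in> carrier_vec n" by (simp add: g_def)
  have Mg: "M *\<^sub>v g = b"
  proof (rule eq_vecI)
    show "dim_vec (M *\<^sub>v g) = dim_vec b" by (simp add: M_def b_def)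
    fix k assume "k < dim_vec b"
    then have k: "k < n" by (simp add: b_def)
    have "(M *\<^sub>v g) $ k = (\<Sum>l\<in>{0..<n}. ((if k = l then 1 else 0) - Xs (ed k) * Ks (A (ed k) (ed l))) * Gs A \<beta> (ed l))"
      using k by (simp add: M_def g_def scalar_prod_def)
    also have "\<dots> = (\<Sum>l\<in>{0..<n}. (if k = l then Gs A \<beta> (ed l) else 0)) - (\<Sum>l\<in>{0..<n}. Xs (ed k) * (Ks (A (ed k) (ed l)) * Gs A \<beta> (ed l)))"
      by (simp add: left_diff_distrib sum_subtractf mult.assoc ifmul)
    also have "(\<Sum>l\<in>{0..<n}. (if k = l then Gs A \<beta> (ed l) else 0)) = Gs A \<beta> (ed k)" using k by simp
    also have "(\<Sum>l\<in>{0..<n}. Xs (ed k) * (Ks (A (ed k) (ed l)) * Gs A \<beta> (ed l))) = (\<Sum>e\<in>UNIV. Xs (ed k) * (Ks (A (ed k) e) * Gs A \<beta> e))"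
      by (rule sum_ed[OF bij])
    also have "Gs A \<beta> (ed k) = Xs (ed k) * Ks (\<beta> (ed k)) + (\<Sum>e\<in>UNIV. Xs (ed k) * (Ks (A (ed k) e) * Gs A \<beta> e))"
      by (subst Gs_rec) (simp add: distrib_left sum_distrib_left)
    finally show "(M *\<^sub>v g) $ k = b $ k" using k by (simp add: b_def)
  qed
  have entries: "\<And>i j. i < n \<Longrightarrow> j < n \<Longrightarrow> poly_s (M $$ (i,j))" by (simp add: M_def)
  have polydet: "poly_s (det M)" by (rule poly_s_det) (simp add: M_def)
  have "map_mat c0 M = 1\<^sub>m n"
    by (rule eq_matI) (auto simp: M_def c0.hom_mult c0.hom_minus)
  then have "c0 (det M) = 1" by (metis c0.hom_det det_one)
  then have detnz: "det M \<noteq> 0" by auto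
  have adj: "adj_mat M * M = det M \<cdot>\<^sub>m 1\<^sub>m n" using adj_mat(3)[OF Mc] .
  have adjc: "adj_mat M \<in> carrier_mat n n" using adj_mat(1)[OF Mc] .
  have "(det M \<cdot>\<^sub>m 1\<^sub>m n) *\<^sub>v g = adj_mat M *\<^sub>v b"
    using adj Mg assoc_mult_mat_vec[OF adjc Mc gc] by simp
  then have key: "det M * Gs A \<beta> (ed k) = (adj_mat M *\<^sub>v b) $ k" if k: "k < n" for k
  proof -
    assume eq: "(det M \<cdot>\<^sub>m 1\<^sub>m n) *\<^sub>v g = adj_mat M *\<^sub>v b"
    have "((det M \<cdot>\<^sub>m 1\<^sub>m n) *\<^sub>v g) $ k = (\<Sum>l\<in>{0..<n}. det M * (if l = k then 1 else 0) * Gs A \<beta> (ed l))"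
      using k by (simp add: g_def scalar_prod_def)
    also have "\<dots> = (\<Sum>l\<in>{0..<n}. (if k = l then det M * Gs A \<beta> (ed l) else 0))"
      by (rule sum.cong) auto
    also have "\<dots> = det M * Gs A \<beta> (ed k)" using k by simp
    finally show ?thesis using eq by simp
  qed
  have polyG: "poly_s (det M * Gs A \<beta> e)" for e
  proof -
    obtain k where k: "k < n" "e = ed k" using bij by (metis atLeastLessThan_iff bij_betw_iff_bijections UNIV_I)
    have "(adj_mat M *\<^sub>v b) $ k = (\<Sum>l\<in>{0..<n}. adj_mat M $$ (k,l) * b $ l)"
      using k adjc by (simp add: scalar_prod_def b_def)
    moreover have "poly_s \<dots>"
      by (rule poly_s_sum) (use k in \<open>auto intro!: poly_s_mult poly_s_adj[OF Mc entries] simp: b_def\<close>)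
    ultimately show ?thesis using key[OF k(1)] k(2) by simp
  qed
  define F where "F = (\<lambda>m. \<Sum>P\<in>{P. P \<noteq> [] \<and> (\<forall>x. count_list P x = m x)}. \<alpha> (hd P) * linA A P * \<beta> (last P))"
  have FG: "Ser F = (\<Sum>e\<in>UNIV. Ks (\<alpha> e) * Gs A \<beta> e)"
  proof (subst coef_inject', rule ext)
    fix m :: "'e \<Rightarrow> nat"
    have "{P. P \<noteq> [] \<and> (\<forall>x. count_list P x = m x)} = (\<Union>e. Lset e m)" by (auto simp: Lset_def)
    then have "F m = (\<Sum>P\<in>(\<Union>e. Lset e m). \<alpha> (hd P) * linA A P * \<beta> (last P))" by (simp add: F_def)
    also have "\<dots> = (\<Sum>e\<in>UNIV. \<Sum>P\<in>Lset e m. \<alpha> (hd P) * linA A P * \<beta> (last P))"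
      by (rule sum.UNION_disjoint) (simp, simp, auto simp: Lset_def)
    also have "\<dots> = (\<Sum>e\<in>UNIV. \<alpha> e * (\<Sum>P\<in>Lset e m. linA A P * \<beta> (last P)))"
      by (auto simp: sum_distrib_left Lset_def mult.assoc intro!: sum.cong)
    finally show "coef (Ser F) m = coef (\<Sum>e\<in>UNIV. Ks (\<alpha> e) * Gs A \<beta> e) m"
      by (simp add: coef_sum coef_Ks_mult coef_Gs)
  qed
  have "poly_s (det M * Ser F)"
    unfolding FG sum_distrib_left by (rule poly_s_sum) (metis mult.left_commute poly_s_Ks poly_s_mult polyG)
  moreover have "coef (det M) \<noteq> (\<lambda>_. 0)"
    using detnz by (metis coef_inject' zero_ser_def Ser_inverse UNIV_I)
  ultimately have "rational_series F"
    unfolding rational_series_def using polydet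
    by (intro exI[of _ "coef (det M * Ser F)"] exI[of _ "coef (det M)"]) (auto simp: poly_s_def times_ser_def)
  then show ?thesis by (simp add: F_def)
qed


section \<open>Turning numbers\<close>

lemma Arg_div_int:
  assumes u: "u \<noteq> 0" and v: "v \<noteq> 0"
  shows "\<exists>n::int. Arg (v / u) - Arg v + Arg u = 2 * pi * n"
proof -
  have "cis (Arg (v / u)) = sgn (v / u)" using u v by (simp add: cis_Arg)
  also have "\<dots> = sgn v / sgn u" by simp
  also have "\<dots> = cis (Arg v) / cis (Arg u)" using u v by (simp add: cis_Arg)
  also have "\<dots> = cis (Arg v - Arg u)" by (rule cis_divide)
  finally have "cis (Arg (v / u)) = cis (Arg v - Arg u)" .
  then have "sin (Arg (v / u)) = sin (Arg v - Arg u) \<and> cos (Arg (v / u)) = cos (Arg v - Arg u)"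
    by (metis cis.sel(1) cis.sel(2))
  then obtain n :: int where "Arg (v / u) = Arg v - Arg u + 2 * pi * n"
    using sin_cos_eq_iff by blast
  then show ?thesis by (intro exI[of _ n]) simp
qed

lemma piece_turn_int:
  assumes "start_dir p \<noteq> 0" "end_dir p \<noteq> 0"
  shows "\<exists>n::int. piece_turn p - Arg (end_dir p) + Arg (start_dir p) = 2 * pi * n"
proof (cases p)
  case (Seg a b) then show ?thesis by (intro exI[of _ 0]) simp
next
  case (Arc a b)
  then have a: "\<i> * a \<noteq> 0" and b: "\<i> * b \<noteq> 0" using assms by auto
  obtain n :: int where n: "Arg ((\<i> * b) / (\<i> * a)) - Arg (\<i> * b) + Arg (\<i> * a) = 2 * pi * n"
    using Arg_div_int[OF a b] by blast
  have eq: "(\<i> * b) / (\<i> * a) = b / a" by simp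
  show ?thesis
  proof (cases "Arg (b / a) \<le> 0")
    case True
    then show ?thesis using n Arc eq
      by (intro exI[of _ "n + 1"]) (simp add: ccw_sweep_def algebra_simps)
  next
    case False
    then show ?thesis using n Arc eq
      by (intro exI[of _ "n"]) (simp add: ccw_sweep_def algebra_simps)
  qed
qed

definition locr :: "piece \<Rightarrow> piece \<Rightarrow> real" where
  "locr p q = (piece_turn p + corner_turn (end_dir p) (start_dir q) - Arg (start_dir q) + Arg (start_dir p)) / (2 * pi)"

lemma locr_int:
  assumes "start_dir p \<noteq> 0" "end_dir p \<noteq> 0" "start_dir q \<noteq> 0"
  shows "locr p q = of_int (round (locr p q))"
proof -
  obtain n1 :: int where n1: "piece_turn p - Arg (end_dir p) + Arg (start_dir p) = 2 * pi * n1"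
    using piece_turn_int assms by blast
  obtain n2 :: int where n2: "Arg (start_dir q / end_dir p) - Arg (start_dir q) + Arg (end_dir p) = 2 * pi * n2"
    using Arg_div_int assms by blast
  have "locr p q = of_int (n1 + n2)"
    unfolding locr_def corner_turn_def using n1 n2 by (simp add: field_simps)
  then show ?thesis by (metis round_of_int)
qed

lemma sum_shift_mod:
  assumes "n > 0"
  shows "(\<Sum>k<n. f (Suc k mod n)) = (\<Sum>k<n. (f k :: real))"
proof -
  obtain n' where n: "n = Suc n'" using assms by (cases n) auto
  have "(\<Sum>k<Suc n'. f (Suc k mod Suc n')) = (\<Sum>k<n'. f (Suc k mod Suc n')) + f 0"
    by (simp add: sum.lessThan_Suc)
  also have "(\<Sum>k<n'. f (Suc k mod Suc n')) = (\<Sum>k<n'. f (Suc k))"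
    by (rule sum.cong) auto
  also have "(\<Sum>k<n'. f (Suc k)) + f 0 = (\<Sum>k<Suc n'. f k)"
    by (subst sum.lessThan_Suc_shift) simp
  finally show ?thesis using n by simp
qed

lemma total_turning_eq:
  assumes "ps \<noteq> []"
  shows "total_turning ps = 2 * pi * (\<Sum>k<length ps. locr (ps ! k) (next_piece ps k))"
proof -
  let ?n = "length ps"
  let ?a = "\<lambda>k. Arg (start_dir (ps ! k))"
  have "total_turning ps = (\<Sum>k<?n. 2 * pi * locr (ps ! k) (next_piece ps k) + (?a (Suc k mod ?n) - ?a k))"
    unfolding total_turning_def by (rule sum.cong) (auto simp: locr_def next_piece_def)
  also have "\<dots> = 2 * pi * (\<Sum>k<?n. locr (ps ! k) (next_piece ps k)) + ((\<Sum>k<?n. ?a (Suc k mod ?n)) - (\<Sum>k<?n. ?a k))"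
    by (simp add: sum.distrib sum_subtractf sum_distrib_left)
  also have "(\<Sum>k<?n. ?a (Suc k mod ?n)) = (\<Sum>k<?n. ?a k)"
    using assms by (intro sum_shift_mod) simp
  finally show ?thesis by simp
qed

lemma rotation_number_eq:
  assumes nc: "no_cusps ps"
  shows "rotation_number ps = (\<Sum>k<length ps. round (locr (ps ! k) (next_piece ps k)))"
proof -
  have ne: "ps \<noteq> []" using nc by (simp add: no_cusps_def)
  have each: "locr (ps ! k) (next_piece ps k) = of_int (round (locr (ps ! k) (next_piece ps k)))"
    if k: "k < length ps" for k
  proof (rule locr_int)
    show "start_dir (ps ! k) \<noteq> 0" "end_dir (ps ! k) \<noteq> 0" using nc k by (auto simp: no_cusps_def)
    have "Suc k mod length ps < length ps" using ne by simp
    then show "start_dir (next_piece ps k) \<noteq> 0" using nc by (auto simp: no_cusps_def next_piece_def)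
  qed
  have "total_turning ps / (2 * pi) = (\<Sum>k<length ps. locr (ps ! k) (next_piece ps k))"
    using total_turning_eq[OF ne] by simp
  also have "\<dots> = of_int (\<Sum>k<length ps. round (locr (ps ! k) (next_piece ps k)))"
    using each by simp
  finally show ?thesis unfolding rotation_number_def by (metis round_of_int)
qed

definition sg :: "int \<Rightarrow> int" where "sg z = (if even z then 1 else -1)"

lemma sg_add: "sg (a + b) = sg a * sg b" by (auto simp: sg_def)
lemma sg_sum: "sg (sum f S) = (\<Prod>x\<in>S. sg (f x))"
  by (induct S rule: infinite_finite_induct) (simp add: sg_def, simp add: sg_def, simp add: sg_add)

definition sig :: "piece \<Rightarrow> piece \<Rightarrow> int" where "sig p q = sg (round (locr p q))"

lemma linA_prod: "linA f xs = (\<Prod>k<length xs - 1. f (xs ! k) (xs ! Suc k))"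
proof (induction f xs rule: linA.induct)
  case (1 A a b xs)
  have "length (a # b # xs) - 1 = Suc (length xs)" by simp
  then show ?case using 1 by (simp del: prod.lessThan_Suc add: prod.lessThan_Suc_shift)
qed auto

lemma cyc_prod:
  assumes "xs \<noteq> []"
  shows "(\<Prod>k<length xs. f (xs ! k) (xs ! (Suc k mod length xs))) = linA f xs * f (last xs) (hd xs)"
proof -
  obtain n' where n: "length xs = Suc n'" using assms by (cases xs) auto
  have "(\<Prod>k<Suc n'. f (xs ! k) (xs ! (Suc k mod Suc n'))) = (\<Prod>k<n'. f (xs ! k) (xs ! (Suc k mod Suc n'))) * f (xs ! n') (xs ! 0)"
    by (simp add: prod.lessThan_Suc)
  also have "(\<Prod>k<n'. f (xs ! k) (xs ! (Suc k mod Suc n'))) = (\<Prod>k<n'. f (xs ! k) (xs ! Suc k))"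
    by (rule prod.cong) auto
  also have "\<dots> = linA f xs" using n by (simp add: linA_prod)
  also have "xs ! n' = last xs" using n assms by (simp add: last_conv_nth)
  also have "xs ! 0 = hd xs" using assms by (simp add: hd_conv_nth)
  finally show ?thesis using n by simp
qed

lemma path_sign_prod:
  assumes nc: "no_cusps ps"
  shows "(if concordance ps = 1 then 1 else -1) = - linA sig ps * sig (last ps) (hd ps)"
proof -
  have ne: "ps \<noteq> []" using nc by (simp add: no_cusps_def)
  have "(if concordance ps = 1 then 1 else -1) = - sg (rotation_number ps)"
    by (auto simp: concordance_def sg_def) presburger+
  also have "sg (rotation_number ps) = (\<Prod>k<length ps. sig (ps ! k) (ps ! (Suc k mod length ps)))"
    by (simp add: rotation_number_eq[OF nc] sg_sum sig_def next_piece_def)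
  also have "\<dots> = linA sig ps * sig (last ps) (hd ps)" by (rule cyc_prod[OF ne])
  finally show ?thesis by simp
qed

lemma linA_append:
  "xs \<noteq> [] \<Longrightarrow> ys \<noteq> [] \<Longrightarrow> linA f (xs @ ys) = linA f xs * f (last xs) (hd ys) * linA f ys"
proof (induction xs)
  case (Cons a xs)
  show ?case
  proof (cases xs)
    case Nil
    then show ?thesis using Cons by (cases ys) auto
  next
    case (Cons b r)
    then show ?thesis using Cons.IH Cons.prems by simp
  qed
qed simp

lemma concat_props:
  assumes "P \<noteq> []" "\<And>e. S e \<noteq> []"
  shows "concat (map S P) \<noteq> [] \<and> hd (concat (map S P)) = hd (S (hd P)) \<and> last (concat (map S P)) = last (S (last P))
     \<and> linA f (concat (map S P)) = linA (\<lambda>e e'. linA f (S e) * f (last (S e)) (hd (S e'))) P * linA f (S (last P))"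
  using assms(1)
proof (induction P)
  case (Cons e P)
  show ?case
  proof (cases P)
    case Nil then show ?thesis using assms(2) by simp
  next
    case (Cons e' r)
    then have IH: "concat (map S P) \<noteq> [] \<and> hd (concat (map S P)) = hd (S (hd P)) \<and> last (concat (map S P)) = last (S (last P))
     \<and> linA f (concat (map S P)) = linA (\<lambda>e e'. linA f (S e) * f (last (S e)) (hd (S e'))) P * linA f (S (last P))"
      using Cons.IH by simp
    have "linA f (S e @ concat (map S P)) = linA f (S e) * f (last (S e)) (hd (concat (map S P))) * linA f (concat (map S P))"
      using IH assms(2) by (intro linA_append) auto
    then show ?thesis using IH assms(2) Cons by (simp add: mult.assoc)
  qed
qed simp

lemma chain_cons: "(\<forall>k. Suc k < length (a # b # r) \<longrightarrow> R ((a # b # r) ! k) ((a # b # r) ! Suc k))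
   \<longleftrightarrow> R a b \<and> (\<forall>k. Suc k < length (b # r) \<longrightarrow> R ((b # r) ! k) ((b # r) ! Suc k))"
  apply (auto)
  apply (case_tac k)
   apply auto
  done

lemma linA_mask:
  "linA (\<lambda>e e'. if R e e' then f e e' else 0) P =
     (if (\<forall>k. Suc k < length P \<longrightarrow> R (P ! k) (P ! Suc k)) then linA f P else 0)"
proof (induction P rule: induct_list012)
  case (3 a b r)
  then show ?case by (simp only: chain_cons linA.simps) auto
qed auto


lemma segs_edge_ne: "segs (p # xs @ [q]) \<noteq> []" by (cases xs) auto
lemma closing_ne: "closing_pieces rho s t \<noteq> []" by (simp add: closing_pieces_def)

theorem proposition2p2:
  fixes tail head :: "'e::finite \<Rightarrow> 'v::finite"
    and pos :: "'v \<Rightarrow> complex" and bends :: "'e \<Rightarrow> complex list"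
    and rho :: "complex list" and i j :: 'v
  assumes "perfect_planar_network tail head pos bends rho"
    and "\<forall>v. \<not> on_boundary (pos v) \<longrightarrow> pos v \<notin> path_image (polyline rho)"
    and "\<forall>P a b. on_boundary (pos a) \<and> outdeg tail a = 1 \<and> on_boundary (pos b) \<and> indeg head b = 1
            \<and> is_path tail head P a b \<longrightarrow> no_cusps (C_P tail head pos bends rho P)"
    and "on_boundary (pos i)" and "outdeg tail i = 1"
    and "on_boundary (pos j)" and "indeg head j = 1"
  shows "rational_series (boundary_measurement_series tail head pos bends rho i j)"
proof -
  define S where "S = (\<lambda>e. segs (edge_points tail head pos bends e))"
  have Sne: "\<And>e. S e \<noteq> []" by (simp add: S_def edge_points_def segs_edge_ne)
  define CL where "CL = closing_pieces rho (pos i) (pos j)"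
  have CLne: "CL \<noteq> []" by (simp add: CL_def closing_ne)
  define Aed where "Aed = (\<lambda>e e'. linA sig (S e) * sig (last (S e)) (hd (S e')))"
  define \<alpha> where "\<alpha> = (\<lambda>e. if tail e = i then - sig (last CL) (hd (S e)) else 0)"
  define A' where "A' = (\<lambda>e e'. if head e = tail e' then Aed e e' else 0)"
  define \<beta> where "\<beta> = (\<lambda>e. if head e = j then linA sig (S e) * sig (last (S e)) (hd CL) * linA sig CL else 0)"
  have sign: "path_sign tail head pos bends rho P = \<alpha> (hd P) * linA A' P * \<beta> (last P)"
    if P: "is_path tail head P i j" for P
  proof -
    have nc: "no_cusps (C_P tail head pos bends rho P)" using assms(3) assms(4-7) P by blast
    have CP: "C_P tail head pos bends rho P = concat (map S P) @ CL"
      using P by (simp add: C_P_def S_def CL_def is_path_def)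
    have Pne: "P \<noteq> []" using P by (simp add: is_path_def)
    note cp = concat_props[OF Pne Sne, where f=sig]
    have A'P: "linA A' P = linA Aed P" unfolding A'_def linA_mask using P by (simp add: is_path_def)
    have "path_sign tail head pos bends rho P = - linA sig (concat (map S P) @ CL) * sig (last (concat (map S P) @ CL)) (hd (concat (map S P) @ CL))"
      unfolding path_sign_def using path_sign_prod[OF nc] CP by simp
    also have "linA sig (concat (map S P) @ CL) = linA sig (concat (map S P)) * sig (last (concat (map S P))) (hd CL) * linA sig CL"
      using cp CLne by (intro linA_append) auto
    also have "last (concat (map S P) @ CL) = last CL" using CLne by simp
    also have "hd (concat (map S P) @ CL) = hd (S (hd P))" using cp by simp
    finally show ?thesis using cp P A'P by (simp add: \<alpha>_def \<beta>_def Aed_def is_path_def algebra_simps)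
  qed
  have zero: "\<alpha> (hd P) * linA A' P * \<beta> (last P) = 0" if "P \<noteq> []" "\<not> is_path tail head P i j" for P
    using that by (auto simp: is_path_def \<alpha>_def \<beta>_def A'_def linA_mask)
  have eq: "boundary_measurement_series tail head pos bends rho i j =
     (\<lambda>m. \<Sum>P\<in>{P. P \<noteq> [] \<and> (\<forall>x. count_list P x = m x)}. \<alpha> (hd P) * linA A' P * \<beta> (last P))"
  proof (rule ext)
    fix m :: "'e \<Rightarrow> nat"
    show "boundary_measurement_series tail head pos bends rho i j m =
      (\<Sum>P\<in>{P. P \<noteq> [] \<and> (\<forall>x. count_list P x = m x)}. \<alpha> (hd P) * linA A' P * \<beta> (last P))"
      unfolding boundary_measurement_series_def
    proof (rule sum.mono_neutral_cong_left)
      show "finite {P. P \<noteq> [] \<and> (\<forall>x. count_list P x = m x)}"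
        by (rule finite_subset[OF _ finite_counts[of m]]) auto
      show "{P. is_path tail head P i j \<and> (\<forall>e. count_list P e = m e)} \<subseteq> {P. P \<noteq> [] \<and> (\<forall>x. count_list P x = m x)}"
        by (auto simp: is_path_def)
      show "\<forall>P\<in>{P. P \<noteq> [] \<and> (\<forall>x. count_list P x = m x)} - {P. is_path tail head P i j \<and> (\<forall>e. count_list P e = m e)}.
              \<alpha> (hd P) * linA A' P * \<beta> (last P) = 0"
        using zero by auto
      show "\<And>P. P \<in> {P. is_path tail head P i j \<and> (\<forall>e. count_list P e = m e)} \<Longrightarrow>
              path_sign tail head pos bends rho P = \<alpha> (hd P) * linA A' P * \<beta> (last P)"
        using sign by auto
    qed
  qed
  show ?thesis unfolding eq by (rule transfer_rational)
qed

end
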